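(* Let $G:[0,\nu)\to[0,\infty)$ be strictly increasing with $G(0)=0$, twice differentiable with $G'(x)>0$ for all $x\in(0,\nu)$, and with range $[0,\infty)$. Then the function $x\mapsto G^{-1}(G(x)+G(c))$ is concave for all $c>0$ if and only if the function $u(x)=1/G'(x)$ is concave. *)

theory Defs
  imports "HOL-Analysis.Analysis"
begin

end

theory Submission imports Defs "HOL-Analysis.Analysis" begin

lemma concave_on_realI':
  fixes f f' :: "real \<Rightarrow> real"
  assumes cA: "convex A" and cont: "continuous_on A f"
    and AB: "\<And>x y. x\<in>A \<Longrightarrow> y\<in>A \<Longrightarrow> x<y \<Longrightarrow> {x<..<y} \<subseteq> B"
    and der: "\<And>x. x\<in>B \<Longrightarrow> (f has_real_derivative f' x) (at x)"
    and mon: "\<And>x y. x\<in>B \<Longrightarrow> y\<in>B \<Longrightarrow> x \<le> y \<Longrightarrow> f' y \<le> f' x"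
  shows "concave_on A f"
proof (rule concave_on_linorderI[OF _ cA])
  fix t x y :: real
  assume t: "t > 0" "t < 1"
  assume xy: "x \<in> A" "y \<in> A" "x < y"
  define z where "z = (1 - t) * x + t * y"
  have ivl: "{x..y} \<subseteq> A"
    using connected_contains_Icc[OF convex_connected[OF cA] xy(1,2)] .
  have B: "{x<..<y} \<subseteq> B" using AB xy by blast
  from xy t have xz: "z > x"
    by (simp add: z_def algebra_simps)
  have "y - z = (1 - t) * (y - x)"
    by (simp add: z_def algebra_simps)
  also from xy t have "\<dots> > 0"
    by (intro mult_pos_pos) simp_all
  finally have yz: "z < y"
    by simp
  have dif: "f differentiable (at w)" if "x < w" "w < y" for w
  proof -
    have "w \<in> B" using B that by auto
    then show ?thesis using der[of w] real_differentiable_def by blast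
  qed
  have "\<exists>l \<xi>. x < \<xi> \<and> \<xi> < z \<and> DERIV f \<xi> :> l \<and> f z - f x = (z - x) * l"
    apply (rule MVT[OF xz])
     apply (rule continuous_on_subset[OF cont]) using ivl yz apply force
    using dif yz by simp
  then obtain l1 \<xi> where \<xi>: "\<xi> > x" "\<xi> < z" "DERIV f \<xi> :> l1" "f z - f x = (z - x) * l1"
    by auto
  have "\<exists>l \<eta>. z < \<eta> \<and> \<eta> < y \<and> DERIV f \<eta> :> l \<and> f y - f z = (y - z) * l"
    apply (rule MVT[OF yz])
     apply (rule continuous_on_subset[OF cont]) using ivl xz apply force
    using dif xz by simp
  then obtain l2 \<eta> where \<eta>: "\<eta> > z" "\<eta> < y" "DERIV f \<eta> :> l2" "f y - f z = (y - z) * l2"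
    by auto
  have "\<xi> \<in> B" "\<eta> \<in> B" using \<xi> \<eta> xz yz B by auto
  then have "l1 = f' \<xi>" "l2 = f' \<eta>" using \<xi> \<eta> der DERIV_unique by blast+
  then have "l2 \<le> l1" using mon \<open>\<xi> \<in> B\<close> \<open>\<eta> \<in> B\<close> \<xi> \<eta> by auto
  have "(y - z) * (z - x) * l2 \<le> (y - z) * (z - x) * l1"
    by (rule mult_left_mono) (use \<open>l2 \<le> l1\<close> xz yz in auto)
  moreover have "(f y - f z) * (z - x) = (y - z) * (z - x) * l2"
    unfolding \<eta>(4) by (simp add: mult_ac)
  moreover have "(f z - f x) * (y - z) = (y - z) * (z - x) * l1"
    unfolding \<xi>(4) by (simp add: mult_ac)
  ultimately have "(f y - f z) * (z - x) \<le> (f z - f x) * (y - z)"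
    by linarith
  also have "z - x = t * (y - x)"
    by (simp add: z_def algebra_simps)
  also have "y - z = (1 - t) * (y - x)"
    by (simp add: z_def algebra_simps)
  finally have "(f y - f z) * t \<le> (f z - f x) * (1 - t)"
    using xy by simp
  then show "(1 - t) * f x + t * f y \<le> f ((1 - t) *\<^sub>R x + t *\<^sub>R y)"
    by (simp add: z_def algebra_simps)
qed

lemma concave_deriv_antimono:
  fixes f f' :: "real \<Rightarrow> real"
  assumes conc: "concave_on J f" and oJ: "open J" and cJ: "convex J"
    and der: "\<And>x. x\<in>J \<Longrightarrow> (f has_real_derivative f' x) (at x)"
    and xy: "x \<in> J" "y \<in> J" "x \<le> y"
  shows "f' y \<le> f' x"
proof -
  have cv: "convex_on J (\<lambda>x. - f x)" using conc by (simp add: concave_on_def)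
  have tan: "- f b + f a \<ge> - f' a * (b - a)" if "a \<in> J" "b \<in> J" for a b
  proof -
    have "(\<lambda>x. - f x) b - (\<lambda>x. - f x) a \<ge> (- f' a) * (b - a)"
      apply (rule convex_on_imp_above_tangent[OF cv convex_connected[OF cJ]])
      using that oJ interior_open apply auto[2]
      using der[OF that(1)] by (simp add: DERIV_minus has_field_derivative_at_within)
    then show ?thesis by simp
  qed
  show ?thesis
  proof (cases "x = y")
    case False
    then have "x < y" using xy by simp
    have "f y - f x \<le> f' x * (y - x)" using tan[OF xy(1,2)] by simp
    moreover have "f x - f y \<le> f' y * (x - y)" using tan[OF xy(2,1)] by simp
    ultimately have "f' y * (y - x) \<le> f' x * (y - x)" by (simp add: algebra_simps)
    then show ?thesis using \<open>x < y\<close> by simp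
  qed simp
qed

lemma antimono_deriv_nonpos:
  fixes g :: "real \<Rightarrow> real" and g' :: real
  assumes oJ: "open J"
    and mon: "\<And>x y. x\<in>J \<Longrightarrow> y\<in>J \<Longrightarrow> x \<le> y \<Longrightarrow> g y \<le> g x"
    and der: "(g has_real_derivative g') (at x)" and x: "x \<in> J"
  shows "g' \<le> 0"
proof (rule ccontr)
  assume "\<not> g' \<le> 0"
  then obtain d where d: "d > 0" "\<And>h. h > 0 \<Longrightarrow> h < d \<Longrightarrow> g x < g (x + h)"
    using DERIV_pos_inc_right[OF der] by force
  obtain e where e: "e > 0" "ball x e \<subseteq> J" using oJ x open_contains_ball by blast
  define h where "h = min d e / 2"
  have h: "h > 0" "h < d" "h < e" using d e by (auto simp: h_def)
  have "x + h \<in> J" using e h by (auto simp: dist_real_def)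
  then have "g (x + h) \<le> g x" using mon x h by auto
  with d h show False by force
qed

lemma deriv_nonpos_antimono:
  fixes g g' :: "real \<Rightarrow> real"
  assumes cJ: "convex J"
    and der: "\<And>x. x \<in> J \<Longrightarrow> (g has_real_derivative g' x) (at x)"
    and np: "\<And>x. x \<in> J \<Longrightarrow> g' x \<le> 0"
    and xy: "x \<in> J" "y \<in> J" "x \<le> y"
  shows "g y \<le> g x"
proof -
  have "{x..y} \<subseteq> J" using connected_contains_Icc[OF convex_connected[OF cJ] xy(1,2)] .
  then show ?thesis
    using DERIV_nonpos_imp_nonincreasing[OF xy(3), of g] der np by fastforce
qed


lemma sign_aux:
  fixes p q r s :: real
  assumes p: "p > 0" and q: "q > 0"
  shows "(r * q - p * (s * (p / q))) / (q * q) \<le> 0 \<longleftrightarrow> - s / q\<^sup>2 \<le> - r / p\<^sup>2"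
proof -
  have "(r * q - p * (s * (p / q))) / (q * q) \<le> 0 \<longleftrightarrow> r * q - p * (s * (p / q)) \<le> 0"
  proof -
    have aux: "\<And>X d::real. 0 < d \<Longrightarrow> X / d \<le> 0 \<longleftrightarrow> X \<le> 0" by (auto simp: divide_le_0_iff)
    show ?thesis by (rule aux) (use q in simp)
  qed
  also have "\<dots> \<longleftrightarrow> (r * q - p * (s * (p / q))) * q \<le> 0"
    using q by (simp add: mult_le_0_iff)
  also have "(r * q - p * (s * (p / q))) * q = r * q\<^sup>2 - s * p\<^sup>2"
    using q by (simp add: field_simps power2_eq_square)
  also have "r * q\<^sup>2 - s * p\<^sup>2 \<le> 0 \<longleftrightarrow> r / p\<^sup>2 \<le> s / q\<^sup>2"
    using p q by (simp add: field_simps)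
  also have "\<dots> \<longleftrightarrow> - s / q\<^sup>2 \<le> - r / p\<^sup>2" by simp
  finally show ?thesis .
qed

theorem lemma6:
  fixes G G' G'' :: "real \<Rightarrow> real" and \<nu> :: ereal
  assumes nu_pos: "\<nu> > 0"
    and mono: "strict_mono_on {x. 0 \<le> x \<and> ereal x < \<nu>} G"
    and G0: "G 0 = 0"
    and d1: "\<And>x. 0 \<le> x \<Longrightarrow> ereal x < \<nu> \<Longrightarrow>
               (G has_real_derivative G' x) (at x within {x. 0 \<le> x \<and> ereal x < \<nu>})"
    and d2: "\<And>x. 0 \<le> x \<Longrightarrow> ereal x < \<nu> \<Longrightarrow>
               (G' has_real_derivative G'' x) (at x within {x. 0 \<le> x \<and> ereal x < \<nu>})"
    and dpos: "\<And>x. 0 < x \<Longrightarrow> ereal x < \<nu> \<Longrightarrow> G' x > 0"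
    and range: "G ` {x. 0 \<le> x \<and> ereal x < \<nu>} = {0..}"
  shows "(\<forall>c. 0 < c \<and> ereal c < \<nu> \<longrightarrow>
            concave_on {x. 0 \<le> x \<and> ereal x < \<nu>}
              (\<lambda>x. the_inv_into {x. 0 \<le> x \<and> ereal x < \<nu>} G (G x + G c)))
         \<longleftrightarrow> concave_on {x. 0 < x \<and> ereal x < \<nu>} (\<lambda>x. 1 / G' x)"
proof -
  define I where "I = {x. 0 \<le> x \<and> ereal x < \<nu>}"
  define J where "J = {x. 0 < x \<and> ereal x < \<nu>}"
  define F where "F = the_inv_into I G"
  define w where "w = (\<lambda>x. - G'' x / (G' x)\<^sup>2)"
  define H where "H = (\<lambda>c x. F (G x + G c))"
  define H' where "H' = (\<lambda>c x. G' x / G' (H c x))"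
  define H'' where "H'' = (\<lambda>c x. (G'' x * G' (H c x) - G' x * (G'' (H c x) * H' c x)) / (G' (H c x) * G' (H c x)))"
  have JI: "J \<subseteq> I" by (auto simp: I_def J_def)
  have openJ: "open J"
  proof -
    have "J = {0<..} \<inter> ereal -` {..<\<nu>}" by (auto simp: J_def)
    then show ?thesis by (simp add: open_Int open_ereal_vimage)
  qed
  have ivl: "{x<..<y} \<subseteq> J" if "x \<in> I" "y \<in> I" for x y
  proof
    fix z assume z: "z \<in> {x<..<y}"
    then have "ereal z < ereal y" by simp
    also have "\<dots> < \<nu>" using that by (simp add: I_def)
    finally show "z \<in> J" using z that by (auto simp: I_def J_def)
  qed
  have convI: "convex I"
    unfolding is_interval_convex_1[symmetric] is_interval_1
  proof (intro ballI allI impI)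
    fix a b x assume h: "a \<in> I" "b \<in> I" "a \<le> x \<and> x \<le> b"
    have "ereal x \<le> ereal b" using h by simp
    also have "\<dots> < \<nu>" using h by (simp add: I_def)
    finally show "x \<in> I" using h by (simp add: I_def)
  qed
  have convJ: "convex J"
    unfolding is_interval_convex_1[symmetric] is_interval_1
  proof (intro ballI allI impI)
    fix a b x assume h: "a \<in> J" "b \<in> J" "a \<le> x \<and> x \<le> b"
    have "ereal x \<le> ereal b" using h by simp
    also have "\<dots> < \<nu>" using h by (simp add: J_def)
    finally show "x \<in> J" using h by (simp add: J_def)
  qed
  have inj: "inj_on G I" using strict_mono_on_imp_inj_on[OF mono] by (simp add: I_def)
  have FG: "F (G x) = x" if "x \<in> I" for x
    using the_inv_into_f_f[OF inj that] by (simp add: F_def)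
  have GF: "G (F y) = y" if "0 \<le> y" for y
    using f_the_inv_into_f[OF inj, of y] range that by (simp add: F_def I_def)
  have FI: "F y \<in> I" if "0 \<le> y" for y
    using the_inv_into_into[OF inj, of y I] range that by (simp add: F_def I_def)
  have Gge: "0 \<le> G x" if "x \<in> I" for x
    using range that by (auto simp: I_def)
  have Gmono: "G x < G y" if "x \<in> I" "y \<in> I" "x < y" for x y
    using strict_mono_onD[OF mono] that by (simp add: I_def)
  have Gle_imp: "x < y" if "x \<in> I" "y \<in> I" "G x < G y" for x y
  proof (rule ccontr)
    assume "\<not> x < y"
    then have "y < x \<or> y = x" by auto
    then show False using Gmono[OF that(2,1)] that(3) by auto
  qed
  have zI: "0 \<in> I" using nu_pos by (simp add: I_def zero_ereal_def)
  have FJ: "F y \<in> J" if "0 < y" for y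
  proof -
    have "F y \<in> I" using FI that by simp
    moreover have "F y \<noteq> 0" using GF[of y] that G0 by auto
    ultimately show ?thesis by (auto simp: I_def J_def)
  qed
  have dG: "(G has_real_derivative G' x) (at x)" if "x \<in> J" for x
  proof -
    have "(G has_real_derivative G' x) (at x within J)"
      using has_field_derivative_subset[OF d1 JI[unfolded I_def]] that by (auto simp: J_def)
    then show ?thesis using at_within_open[OF that openJ] by simp
  qed
  have dG': "(G' has_real_derivative G'' x) (at x)" if "x \<in> J" for x
  proof -
    have "(G' has_real_derivative G'' x) (at x within J)"
      using has_field_derivative_subset[OF d2 JI[unfolded I_def]] that by (auto simp: J_def)
    then show ?thesis using at_within_open[OF that openJ] by simp
  qed
  have Gp: "0 < G' x" if "x \<in> J" for x using dpos that by (simp add: J_def)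
  have contGw: "continuous (at x within I) G" if "x \<in> I" for x
    using DERIV_continuous[OF d1] that by (simp add: I_def)
  have isContF: "isCont F t" if t: "0 < t" for t
  proof -
    have x: "F t \<in> J" using FJ t .
    obtain e where e: "e > 0" "ball (F t) e \<subseteq> J" using openJ x open_contains_ball by blast
    have zJ: "z \<in> J" if "\<bar>z - F t\<bar> \<le> e / 2" for z
    proof -
      have "dist (F t) z < e" using e(1) that by (simp add: dist_real_def abs_minus_commute)
      then show ?thesis using e(2) by auto
    qed
    have "isCont F (G (F t))"
    proof (rule isCont_inverse_function[where d="e/2" and f=G and g=F and x="F t"])
      show "0 < e / 2" using e by simp
      show "F (G z) = z" if "\<bar>z - F t\<bar> \<le> e / 2" for z using FG zJ[OF that] JI by auto
      show "isCont G z" if "\<bar>z - F t\<bar> \<le> e / 2" for z using DERIV_isCont[OF dG[OF zJ[OF that]]] .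
    qed
    then show ?thesis using GF t by simp
  qed
  have dF: "(F has_real_derivative inverse (G' (F t))) (at t)" if t: "0 < t" for t
  proof (rule DERIV_inverse_function[where a=0 and b="t+1"])
    show "(G has_real_derivative G' (F t)) (at (F t))" using dG[OF FJ[OF t]] .
    show "G' (F t) \<noteq> 0" using Gp[OF FJ[OF t]] by simp
    show "0 < t" "t < t + 1" using t by auto
    show "G (F y) = y" if "0 < y" "y < t + 1" for y using GF that by simp
    show "isCont F t" using isContF[OF t] .
  qed
  have Gc: "0 < G c" if "c \<in> J" for c
    using Gmono[OF zI, of c] that JI G0 by (auto simp: J_def)
  have GH: "G (H c x) = G x + G c" if "c \<in> J" "x \<in> I" for c x
    using GF Gge[OF that(2)] Gc[OF that(1)] by (simp add: H_def)
  have HJ: "H c x \<in> J" if "c \<in> J" "x \<in> I" for c x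
    using FJ Gge[OF that(2)] Gc[OF that(1)] by (simp add: H_def)
  have Hgt: "x < H c x" if "c \<in> J" "x \<in> I" for c x
    using Gle_imp[OF that(2)] HJ[OF that] JI GH[OF that] Gc[OF that(1)] by auto
  have dH: "(H c has_real_derivative H' c x) (at x)" if c: "c \<in> J" and x: "x \<in> J" for c x
  proof -
    have xI: "x \<in> I" using x JI by auto
    have "((\<lambda>x. G x + G c) has_real_derivative G' x + 0) (at x)"
      by (rule DERIV_add[OF dG[OF x] DERIV_const])
    then have a: "((\<lambda>x. G x + G c) has_real_derivative G' x) (at x)" by simp
    have "((\<lambda>x. F (G x + G c)) has_real_derivative inverse (G' (F (G x + G c))) * G' x) (at x)"
      by (rule DERIV_chain2[OF dF a]) (use Gge[OF xI] Gc[OF c] in simp)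
    then show ?thesis by (simp add: H_def H'_def divide_inverse mult.commute)
  qed
  have dH': "(H' c has_real_derivative H'' c x) (at x)" if c: "c \<in> J" and x: "x \<in> J" for c x
  proof -
    have xI: "x \<in> I" using x JI by auto
    have a: "((\<lambda>x. G' (H c x)) has_real_derivative G'' (H c x) * H' c x) (at x)"
      by (rule DERIV_chain2[OF dG'[OF HJ[OF c xI]] dH[OF c x]])
    have "((\<lambda>x. G' x / G' (H c x)) has_real_derivative
       (G'' x * G' (H c x) - G' x * (G'' (H c x) * H' c x)) / (G' (H c x) * G' (H c x))) (at x)"
      by (rule DERIV_divide[OF dG'[OF x] a]) (use Gp[OF HJ[OF c xI]] in simp)
    then show ?thesis unfolding H''_def by (simp add: H'_def)
  qed
  have sign: "H'' c x \<le> 0 \<longleftrightarrow> w (H c x) \<le> w x" if c: "c \<in> J" and x: "x \<in> J" for c x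
  proof -
    have xI: "x \<in> I" using x JI by auto
    show ?thesis
      unfolding H''_def w_def H'_def
      using sign_aux[OF Gp[OF x] Gp[OF HJ[OF c xI]], of "G'' x" "G'' (H c x)"] by simp
  qed
  have du: "((\<lambda>x. 1 / G' x) has_real_derivative w x) (at x)" if x: "x \<in> J" for x
  proof -
    have "((\<lambda>x. 1 / G' x) has_real_derivative (0 * G' x - 1 * G'' x) / (G' x * G' x)) (at x)"
      by (rule DERIV_divide[OF DERIV_const dG'[OF x]]) (use Gp[OF x] in simp)
    then show ?thesis by (simp add: w_def power2_eq_square)
  qed
  have contu: "continuous_on J (\<lambda>x. 1 / G' x)"
    by (rule DERIV_continuous_on[where D=w]) (use du has_field_derivative_at_within in blast)
  have contH: "continuous_on I (H c)" if c: "c \<in> J" for c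
    unfolding continuous_on_eq_continuous_within
  proof
    fix x assume xI: "x \<in> I"
    have ct: "continuous (at x within I) (\<lambda>x. G x + G c)"
      by (intro continuous_intros contGw[OF xI])
    have pos: "0 < G x + G c" using Gge[OF xI] Gc[OF c] by simp
    show "continuous (at x within I) (H c)"
      unfolding H_def
      using continuous_within_compose3[where g=F and f="\<lambda>x. G x + G c", OF isContF[OF pos] ct] by simp
  qed
  have main: "(\<forall>c. 0 < c \<and> ereal c < \<nu> \<longrightarrow> concave_on I (H c)) \<longleftrightarrow> concave_on J (\<lambda>x. 1 / G' x)"
  proof
    assume L: "\<forall>c. 0 < c \<and> ereal c < \<nu> \<longrightarrow> concave_on I (H c)"
    show "concave_on J (\<lambda>x. 1 / G' x)"
    proof (rule concave_on_realI'[where B=J and f'=w, OF convJ contu])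
      show "{x<..<y} \<subseteq> J" if "x \<in> J" "y \<in> J" "x < y" for x y using ivl that JI by auto
      show "((\<lambda>x. 1 / G' x) has_real_derivative w x) (at x)" if "x \<in> J" for x using du that .
      show "w y \<le> w x" if x: "x \<in> J" and y: "y \<in> J" and xy: "x \<le> y" for x y
      proof (cases "x = y")
        case False
        then have "x < y" using xy by simp
        have xI: "x \<in> I" and yI: "y \<in> I" using x y JI by auto
        have lt: "G x < G y" using Gmono[OF xI yI \<open>x < y\<close>] .
        define c where "c = F (G y - G x)"
        have c: "c \<in> J" using FJ lt by (simp add: c_def)
        have Gcc: "G c = G y - G x" using GF lt by (simp add: c_def)
        have Hx: "H c x = y" using FG[OF yI] Gcc by (simp add: H_def)
        have "concave_on I (H c)" using L c by (simp add: J_def)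
        then have cJ: "concave_on J (H c)"
          unfolding concave_on_def using convex_on_subset JI convJ by blast
        have "H' c v \<le> H' c u" if "u \<in> J" "v \<in> J" "u \<le> v" for u v
          by (rule concave_deriv_antimono[OF cJ openJ convJ dH[OF c] that])
        then have "H'' c x \<le> 0"
          by (rule antimono_deriv_nonpos[OF openJ _ dH'[OF c x] x])
        then have "w (H c x) \<le> w x" using sign[OF c x] by simp
        then show ?thesis using Hx by simp
      qed simp
    qed
  next
    assume R: "concave_on J (\<lambda>x. 1 / G' x)"
    have wmono: "w y \<le> w x" if "x \<in> J" "y \<in> J" "x \<le> y" for x y
      by (rule concave_deriv_antimono[OF R openJ convJ du that])
    show "\<forall>c. 0 < c \<and> ereal c < \<nu> \<longrightarrow> concave_on I (H c)"
    proof (intro allI impI)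
      fix c assume "0 < c \<and> ereal c < \<nu>"
      then have c: "c \<in> J" by (simp add: J_def)
      have np: "H'' c x \<le> 0" if x: "x \<in> J" for x
      proof -
        have xI: "x \<in> I" using x JI by auto
        have "w (H c x) \<le> w x"
          using wmono[OF x HJ[OF c xI]] Hgt[OF c xI] by simp
        then show ?thesis using sign[OF c x] by simp
      qed
      have am: "H' c y \<le> H' c x" if "x \<in> J" "y \<in> J" "x \<le> y" for x y
        by (rule deriv_nonpos_antimono[OF convJ dH'[OF c] np that])
      show "concave_on I (H c)"
        by (rule concave_on_realI'[OF convI contH[OF c] ivl dH[OF c] am])
    qed
  qed
  then show ?thesis unfolding H_def F_def I_def J_def by simp
qed

end
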